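(* Let the standing assumptions (listed in the context) hold. Then: 1) If Algorithm SLBFGS is applied with $\epsilon=0$, then it either terminates after finitely many iterations with an $x_k$ that satisfies $\nabla\mathcal{J}(x_k)=0$ or it generates a sequence $(x_k)$ such that $\lim_{k\to\infty}\|\nabla\mathcal{J}(x_k)\| = 0$. In particular, every cluster point of $(x_k)$ is stationary. 2) If Algorithm SLBFGS is applied with $\epsilon>0$, then it terminates after finitely many iterations with an $x_k$ that satisfies $\|\nabla\mathcal{J}(x_k)\|\leq\epsilon$.
   Context: Let $\mathcal{X}$ be a Hilbert space and $\mathcal{J}:\mathcal{X}\to\mathbb{R}$. Algorithm SLBFGS (structured inverse L-BFGS): inputs $x_0\in\mathcal{X}$, $\epsilon\geq0$, $\ell\in\mathbb{N}_0$, $c_0\geq 0$, $C_0\in[c_0,\infty]$, $c_s,c_1,c_2>0$; let $\tau_0>0$. For $k=0,1,2,\ldots$: let $m=\max\{0,k-\ell\}$; choose a symmetric positive semi-definite bounded linear operator $S_k$; set $B_k^{(0)}=\tau_k I+S_k$; let $B_k$ be obtained from $B_k^{(0)}$ and the currently stored pairs $(s_j,y_j)$, $m\le j\le k-1$, by successive L-BFGS updates $B\mapsto B+\frac{yy^T}{y^Ts}-\frac{Bss^TB}{s^TBs}$; set $d_k=-B_k^{-1}\nabla\mathcal{J}(x_k)$; compute a step length $\alpha_k>0$ by a line search; set $s_k=\alpha_kd_k$, $x_{k+1}=x_k+s_k$, $y_k=\nabla\mathcal{J}(x_{k+1})-\nabla\mathcal{J}(x_k)$; store $(s_k,y_k)$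 only if $y_k^Ts_k>c_s\|s_k\|^2$; if $k\ge\ell$ remove $(s_m,y_m)$ from storage; stop with output $x_{k+1}$ if $\|\nabla\mathcal{J}(x_{k+1})\|\le\epsilon$; set $z_k=y_k-S_{k+1}s_k$, $\omega^l_{k+1}=\min\{c_0,c_1\|\nabla\mathcal{J}(x_{k+1})\|^{c_2}\}$, $\omega^u_{k+1}=\max\{C_0,(c_1\|\nabla\mathcal{J}(x_{k+1})\|^{c_2})^{-1}\}$; with $P(t)=\min\{\max\{t,\omega^l_{k+1}\},\omega^u_{k+1}\}$ and $\rho=z_k^Ts_k$ let $\tau^s=P(\rho/\|s_k\|^2)$, $\tau^g=P(\|z_k\|/\|s_k\|)$, $\tau^z=P(\|z_k\|^2/\rho)$; if $\rho>0$ choose $\tau_{k+1}\in[\tau^s,\tau^z]$, else choose $\tau_{k+1}\in[\tau^s,\tau^g]$. Line searches: Armijo with backtracking means, for fixed $\beta,\sigma\in(0,1)$, $\alpha_k$ is the largest number in $\{1,\beta,\beta^2,\ldots\}$ with $\mathcal{J}(x_{k+1})\le\mathcal{J}(x_k)+\alpha_k\sigma\nabla\mathcal{J}(x_k)^Td_k$; the Wolfe–Powell conditions are this Armijo inequality together with $\nabla\mathcal{J}(x_{k+1})^Td_k\ge\eta\nabla\mathcal{J}(x_k)^Td_k$ for fixed $\eta\in(\sigma,1)$. Let $\Omega=\{x:\mathcal{J}(x)\le\mathcal{J}(x_0)\}$ and $\Omega_\delta=\{x:\exists\hat x\in\Omega,\ \|x-\hat x\|<\delta\}$. Standing assumptions: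 1) $\mathcal{J}$ is continuously differentiable and bounded below; 2) $\nabla\mathcal{J}$ is Lipschitz continuous on $\Omega$ with constant $L>0$; 3) $(\|S_k\|)$ is bounded; 4) the step sizes consistently satisfy the Armijo condition computed by backtracking, or consistently satisfy the Wolfe–Powell conditions; in the Armijo case there is $\delta>0$ such that $\mathcal{J}$ or $\nabla\mathcal{J}$ is uniformly continuous on $\Omega_\delta$; 5) $c_0=0$ is only chosen if then $\sup_k\|(B_k^{(0)})^{-1}\|<\infty$; 6) $C_0=\infty$ is only chosen if either the interval $[\tau^s,\tau^z]$ is replaced by $[\tau^s,\tau^g]$, or $\mathcal{J}$ is twice continuously differentiable, $\overline{G_k}:=\int_0^1\nabla^2\mathcal{J}(x_k+ts_k)\,dt-S_{k+1}$ is symmetric positive semi-definite for all $k$ and $(\|\overline{G_k}\|)$ is bounded. *)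

theory Defs
  imports "HOL-Analysis.Analysis"
begin

definition sym_psd :: "('a::real_inner \<Rightarrow>\<^sub>L 'a) \<Rightarrow> bool" where
  "sym_psd A \<longleftrightarrow> (\<forall>v w. blinfun_apply A v \<bullet> w = v \<bullet> blinfun_apply A w)
                  \<and> (\<forall>v. 0 \<le> v \<bullet> blinfun_apply A v)"

definition lbfgs_update :: "('a::real_inner \<Rightarrow> 'a) \<Rightarrow> 'a \<Rightarrow> 'a \<Rightarrow> ('a \<Rightarrow> 'a)" where
  "lbfgs_update B s y =
     (\<lambda>v. B v + ((y \<bullet> v) / (y \<bullet> s)) *\<^sub>R y - ((s \<bullet> B v) / (s \<bullet> B s)) *\<^sub>R B s)"

definition slbfgs_B0 :: "(nat \<Rightarrow> real) \<Rightarrow> (nat \<Rightarrow> ('a::real_inner \<Rightarrow>\<^sub>L 'a)) \<Rightarrow> nat \<Rightarrow> ('a \<Rightarrow> 'a)" where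
  "slbfgs_B0 tau S k = (\<lambda>v. tau k *\<^sub>R v + blinfun_apply (S k) v)"

definition slbfgs_stored :: "('a::real_inner \<Rightarrow> 'a) \<Rightarrow> real \<Rightarrow> (nat \<Rightarrow> 'a) \<Rightarrow> nat \<Rightarrow> bool" where
  "slbfgs_stored grad cs x j \<longleftrightarrow>
     (grad (x (Suc j)) - grad (x j)) \<bullet> (x (Suc j) - x j) > cs * (norm (x (Suc j) - x j))\<^sup>2"

text \<open>B_k: successive updates of B_k^(0) with the stored pairs j, m <= j <= k-1,
  m = max 0 (k - ell) (natural-number subtraction truncates at 0).\<close>
definition slbfgs_B ::
  "('a::real_inner \<Rightarrow> 'a) \<Rightarrow> nat \<Rightarrow> real \<Rightarrow> (nat \<Rightarrow> real) \<Rightarrow> (nat \<Rightarrow> ('a \<Rightarrow>\<^sub>L 'a))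
   \<Rightarrow> (nat \<Rightarrow> 'a) \<Rightarrow> nat \<Rightarrow> ('a \<Rightarrow> 'a)" where
  "slbfgs_B grad ell cs tau S x k =
     foldl (\<lambda>B j. if slbfgs_stored grad cs x j
                   then lbfgs_update B (x (Suc j) - x j) (grad (x (Suc j)) - grad (x j))
                   else B)
           (slbfgs_B0 tau S k) [k - ell..<k]"

text \<open>Iteration k is executed iff the algorithm has not stopped in iterations 0..k-1.\<close>
definition slbfgs_active :: "('a::real_normed_vector \<Rightarrow> 'a) \<Rightarrow> real \<Rightarrow> (nat \<Rightarrow> 'a) \<Rightarrow> nat \<Rightarrow> bool" where
  "slbfgs_active grad eps x k \<longleftrightarrow> (\<forall>j<k. eps < norm (grad (x (Suc j))))"

definition armijo_ok ::
  "('a::real_inner \<Rightarrow> real) \<Rightarrow> ('a \<Rightarrow> 'a) \<Rightarrow> real \<Rightarrow> 'a \<Rightarrow> 'a \<Rightarrow> real \<Rightarrow> bool" where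
  "armijo_ok J grad sgm xk dk a \<longleftrightarrow> J (xk + a *\<^sub>R dk) \<le> J xk + a * sgm * (grad xk \<bullet> dk)"

definition armijo_backtracking ::
  "('a::real_inner \<Rightarrow> real) \<Rightarrow> ('a \<Rightarrow> 'a) \<Rightarrow> real \<Rightarrow> real \<Rightarrow> 'a \<Rightarrow> 'a \<Rightarrow> real \<Rightarrow> bool" where
  "armijo_backtracking J grad beta sgm xk dk a \<longleftrightarrow>
     (\<exists>i::nat. a = beta ^ i \<and> armijo_ok J grad sgm xk dk (beta ^ i)
              \<and> (\<forall>j<i. \<not> armijo_ok J grad sgm xk dk (beta ^ j)))"

definition wolfe_powell ::
  "('a::real_inner \<Rightarrow> real) \<Rightarrow> ('a \<Rightarrow> 'a) \<Rightarrow> real \<Rightarrow> real \<Rightarrow> 'a \<Rightarrow> 'a \<Rightarrow> real \<Rightarrow> bool" where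
  "wolfe_powell J grad sgm eta xk dk a \<longleftrightarrow>
     0 < a \<and> armijo_ok J grad sgm xk dk a \<and> grad (xk + a *\<^sub>R dk) \<bullet> dk \<ge> eta * (grad xk \<bullet> dk)"

text \<open>Arguments: g = grad x_{k+1}, s = s_k, z = z_k, t = tau_{k+1}.
  If gvar is True the interval [tau^s, tau^z] is replaced by [tau^s, tau^g].
  Omega^u may be infinite (C0 = \<infinity>), hence the use of ereal.\<close>
definition slbfgs_tau_ok ::
  "bool \<Rightarrow> real \<Rightarrow> ereal \<Rightarrow> real \<Rightarrow> real \<Rightarrow> 'a::real_inner \<Rightarrow> 'a \<Rightarrow> 'a \<Rightarrow> real \<Rightarrow> bool" where
  "slbfgs_tau_ok gvar c0 C0 c1 c2 g s z t \<longleftrightarrow>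
     (let wl = min c0 (c1 * norm g powr c2);
          wu = max C0 (ereal (inverse (c1 * norm g powr c2)));
          P = (\<lambda>r::real. min (max (ereal r) (ereal wl)) wu);
          rho = z \<bullet> s;
          ts = P (rho / (norm s)\<^sup>2);
          tg = P (norm z / norm s);
          tz = P ((norm z)\<^sup>2 / rho)
      in if rho > 0 \<and> \<not> gvar then ts \<le> ereal t \<and> ereal t \<le> tz
         else ts \<le> ereal t \<and> ereal t \<le> tg)"

definition slbfgs_run ::
  "('a::{real_inner,complete_space} \<Rightarrow> real) \<Rightarrow> ('a \<Rightarrow> 'a) \<Rightarrow> real \<Rightarrow> nat \<Rightarrow> real \<Rightarrow> ereal
   \<Rightarrow> real \<Rightarrow> real \<Rightarrow> real \<Rightarrow> bool \<Rightarrow> real \<Rightarrow> real \<Rightarrow> real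
   \<Rightarrow> (nat \<Rightarrow> 'a) \<Rightarrow> (nat \<Rightarrow> 'a) \<Rightarrow> (nat \<Rightarrow> real) \<Rightarrow> (nat \<Rightarrow> real) \<Rightarrow> (nat \<Rightarrow> ('a \<Rightarrow>\<^sub>L 'a))
   \<Rightarrow> bool" where
  "slbfgs_run J grad eps ell c0 C0 cs c1 c2 armijo beta sgm eta x d alpha tau S \<longleftrightarrow>
     0 < tau 0 \<and> (\<forall>k. sym_psd (S k)) \<and>
     (\<forall>k. slbfgs_active grad eps x k \<longrightarrow>
        slbfgs_B grad ell cs tau S x k (d k) = - grad (x k) \<and>
        (if armijo then armijo_backtracking J grad beta sgm (x k) (d k) (alpha k)
         else wolfe_powell J grad sgm eta (x k) (d k) (alpha k)) \<and>
        x (Suc k) = x k + alpha k *\<^sub>R d k \<and>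
        (eps < norm (grad (x (Suc k))) \<longrightarrow>
           slbfgs_tau_ok False c0 C0 c1 c2 (grad (x (Suc k))) (x (Suc k) - x k)
             ((grad (x (Suc k)) - grad (x k)) - blinfun_apply (S (Suc k)) (x (Suc k) - x k))
             (tau (Suc k))))"

end

theory Submission
  imports Defs "HOL-Analysis.Analysis"
begin

definition symop :: "('a::real_inner \<Rightarrow> 'a) \<Rightarrow> bool" where
  "symop B \<longleftrightarrow> (\<forall>v w. B v \<bullet> w = v \<bullet> B w)"
definition psdop :: "('a::real_inner \<Rightarrow> 'a) \<Rightarrow> bool" where
  "psdop B \<longleftrightarrow> (\<forall>v. 0 \<le> v \<bullet> B v)"

lemma real_disc:
  fixes p q r :: real
  assumes "\<And>t. 0 \<le> p + 2*t*q + t^2*r" "0 \<le> r"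
  shows "q^2 \<le> p * r"
proof (cases "r = 0")
  case True
  have "q = 0"
  proof (rule ccontr)
    assume "q \<noteq> 0"
    have "0 \<le> p + 2*(-(p+1)/(2*q))*q" using assms(1)[of "-(p+1)/(2*q)"] True by simp
    also have "\<dots> = -1" using \<open>q\<noteq>0\<close> by (simp add: field_simps)
    finally show False by simp
  qed
  thus ?thesis using True by simp
next
  case False
  hence r: "r > 0" using assms(2) by simp
  have "0 \<le> p + 2*(-q/r)*q + (-q/r)^2*r" by (rule assms(1))
  also have "\<dots> = p - q^2/r" using r by (simp add: field_simps power2_eq_square)
  finally show ?thesis using r by (simp add: field_simps)
qed

lemma quad_expand:
  assumes "linear B" "symop B"
  shows "(v + t *\<^sub>R s) \<bullet> B (v + t *\<^sub>R s) = v \<bullet> B v + 2*t*(s \<bullet> B v) + t^2*(s \<bullet> B s)"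
proof -
  have sy: "v \<bullet> B s = s \<bullet> B v" using assms(2) unfolding symop_def by (metis inner_commute)
  have "B (v + t *\<^sub>R s) = B v + t *\<^sub>R B s" using assms(1) by (simp add: linear_add linear_scale)
  thus ?thesis using sy by (simp add: inner_add_left inner_add_right algebra_simps power2_eq_square inner_commute)
qed

lemma cs_semi:
  assumes "linear B" "symop B" "psdop B"
  shows "(s \<bullet> B v)^2 \<le> (v \<bullet> B v) * (s \<bullet> B s)"
  apply (rule real_disc)
  using quad_expand[OF assms(1,2)] assms(3) unfolding psdop_def by metis+


lemma upd_apply: "lbfgs_update B s y v = B v + ((y \<bullet> v) / (y \<bullet> s)) *\<^sub>R y - ((s \<bullet> B v) / (s \<bullet> B s)) *\<^sub>R B s"
  by (simp add: lbfgs_update_def)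

lemma upd_linear: assumes "linear B" shows "linear (lbfgs_update B s y)"
proof -
  interpret l: linear B by fact
  show ?thesis
    by (rule linearI) (simp_all add: upd_apply l.add l.scale inner_add_right algebra_simps add_divide_distrib scaleR_add_left)
qed

lemma upd_sym: assumes "symop B" shows "symop (lbfgs_update B s y)"
  unfolding symop_def
proof (intro allI)
  fix v w
  have sy: "\<And>v w. B v \<bullet> w = v \<bullet> B w" using assms unfolding symop_def by blast
  have e1: "v \<bullet> B s = s \<bullet> B v" by (metis sy inner_commute)
  have l: "lbfgs_update B s y v \<bullet> w = B v \<bullet> w + (y \<bullet> v)/(y \<bullet> s)*(y \<bullet> w) - (s \<bullet> B v)/(s \<bullet> B s)*(B s \<bullet> w)"
    by (simp add: upd_apply inner_diff_left inner_add_left)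
  have r: "v \<bullet> lbfgs_update B s y w = v \<bullet> B w + (y \<bullet> w)/(y \<bullet> s)*(v \<bullet> y) - (s \<bullet> B w)/(s \<bullet> B s)*(v \<bullet> B s)"
    by (simp add: upd_apply inner_diff_right inner_add_right)
  show "lbfgs_update B s y v \<bullet> w = v \<bullet> lbfgs_update B s y w"
    unfolding l r e1 sy[of v w] sy[of s w] inner_commute[of v y] by (simp add: mult.commute)
qed

lemma upd_quad:
  assumes "symop B"
  shows "v \<bullet> lbfgs_update B s y v = v \<bullet> B v + (y \<bullet> v)^2 / (y \<bullet> s) - (s \<bullet> B v)^2 / (s \<bullet> B s)"
proof -
  have sy: "\<And>v w. B v \<bullet> w = v \<bullet> B w" using assms unfolding symop_def by blast
  have "v \<bullet> B s = s \<bullet> B v" by (metis sy inner_commute)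
  thus ?thesis unfolding upd_apply
    by (simp add: inner_diff_right inner_add_right power2_eq_square inner_commute)
qed

lemma upd_psd:
  assumes "linear B" "symop B" "psdop B" "0 \<le> y \<bullet> s"
  shows "psdop (lbfgs_update B s y)"
  unfolding psdop_def
proof
  fix v
  have cs: "(s \<bullet> B v)^2 \<le> (v \<bullet> B v) * (s \<bullet> B s)" by (rule cs_semi[OF assms(1-3)])
  have b: "0 \<le> s \<bullet> B s" "0 \<le> v \<bullet> B v" using assms(3) unfolding psdop_def by auto
  have "(s \<bullet> B v)^2 / (s \<bullet> B s) \<le> v \<bullet> B v"
  proof (cases "s \<bullet> B s = 0")
    case True then show ?thesis using b by simp
  next
    case False then show ?thesis using b cs by (simp add: divide_le_eq mult.commute)
  qed
  moreover have "0 \<le> (y \<bullet> v)^2 / (y \<bullet> s)" using assms(4) by simp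
  ultimately show "0 \<le> v \<bullet> lbfgs_update B s y v" unfolding upd_quad[OF assms(2)] by linarith
qed

definition Fl :: "real \<Rightarrow> real \<Rightarrow> real \<Rightarrow> real" where
  "Fl cs Lc m = min m (cs/2) / (2 * (Lc^2/(cs*m) + 1))"
definition Gu :: "real \<Rightarrow> real \<Rightarrow> real \<Rightarrow> real \<Rightarrow> real" where
  "Gu cs Lc m M = M + Lc^2/cs + M^2/m"

lemma Fl_pos: "0 < m \<Longrightarrow> 0 < cs \<Longrightarrow> 0 < Fl cs Lc m"
  unfolding Fl_def by (intro divide_pos_pos) (auto intro!: add_nonneg_pos)

lemma Fl_le: "0 < m \<Longrightarrow> 0 < cs \<Longrightarrow> Fl cs Lc m \<le> m"
proof -
  assume m: "0 < m" and c: "0 < cs"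
  have "1 \<le> 2 * (Lc^2/(cs*m) + 1)" using m c by (simp add: add_nonneg_nonneg)
  hence "min m (cs/2) / (2 * (Lc^2/(cs*m) + 1)) \<le> min m (cs/2) / 1"
    by (rule divide_left_mono) (use m c in \<open>auto intro!: add_nonneg_pos\<close>)
  thus ?thesis unfolding Fl_def by simp
qed


lemma aux_lin: "(x::real) \<le> X \<Longrightarrow> 2*(p+q) - X = D \<Longrightarrow> 0 \<le> D \<Longrightarrow> x/2 \<le> p+q"
  by (smt (verit) field_sum_of_halves)

lemma upd_lower:
  fixes B :: "'a::real_inner \<Rightarrow> 'a"
  assumes lin: "linear B" and sym: "symop B" and low: "\<And>v. m * (norm v)^2 \<le> v \<bullet> B v"
    and m: "0 < m" and c: "0 < cs" and Y: "cs * (norm s)^2 \<le> y \<bullet> s"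
    and yL: "norm y \<le> Lc * norm s" and s0: "s \<noteq> 0"
  shows "Fl cs Lc m * (norm v)^2 \<le> v \<bullet> lbfgs_update B s y v"
proof -
  define Yv where "Yv = y \<bullet> s"
  define b where "b = s \<bullet> B s"
  have ns: "0 < norm s" using s0 by simp
  have "0 < cs * (norm s)^2" using c ns by simp
  hence Ypos: "0 < Yv" using Y unfolding Yv_def by linarith
  have "0 < m * (norm s)^2" using m ns by simp
  hence bpos: "0 < b" using low[of s] unfolding b_def by linarith
  define a where "a = (s \<bullet> B v) / b"
  define w where "w = v - a *\<^sub>R s"
  have "w \<bullet> B w = v \<bullet> B v + 2*(-a)*(s \<bullet> B v) + (-a)^2*b"
    unfolding w_def b_def using quad_expand[OF lin sym, of v "-a" s] by simp
  also have "\<dots> = v \<bullet> B v - (s \<bullet> B v)^2 / b" using bpos unfolding a_def by (simp add: field_simps power2_eq_square)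
  finally have wBw: "w \<bullet> B w = v \<bullet> B v - (s \<bullet> B v)^2 / b" .
  define A where "A = v \<bullet> lbfgs_update B s y v"
  have A: "A = w \<bullet> B w + (y \<bullet> v)^2 / Yv" unfolding A_def upd_quad[OF sym] wBw Yv_def b_def by simp
  define W where "W = (norm w)^2"
  define U where "U = (norm (a *\<^sub>R s))^2"
  have W0: "0 \<le> W" and U0: "0 \<le> U" unfolding W_def U_def by auto
  have "0 \<le> (y \<bullet> v)^2 / Yv" using Ypos by simp
  hence A1: "m * W \<le> A" unfolding A W_def using low[of w] by linarith
  have yv: "y \<bullet> v = y \<bullet> w + a * Yv" unfolding w_def Yv_def by (simp add: inner_diff_right)
  have sq: "(y \<bullet> v)^2 \<ge> (a*Yv)^2/2 - (y \<bullet> w)^2"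
  proof -
    have "(y \<bullet> w + a*Yv)^2 - ((a*Yv)^2/2 - (y \<bullet> w)^2) = 2 * (y \<bullet> w + a*Yv/2)^2"
      by (simp add: power2_eq_square algebra_simps)
    moreover have "0 \<le> 2 * (y \<bullet> w + a*Yv/2)^2" by simp
    ultimately show ?thesis unfolding yv by linarith
  qed
  have yw: "(y \<bullet> w)^2 \<le> Lc^2 * (norm s)^2 * W"
  proof -
    have "\<bar>y \<bullet> w\<bar> \<le> norm y * norm w" by (rule Cauchy_Schwarz_ineq2)
    also have "\<dots> \<le> Lc * norm s * norm w" using yL by (simp add: mult_right_mono)
    finally have "(y \<bullet> w)^2 \<le> (Lc * norm s * norm w)^2"
      by (metis abs_ge_zero power2_abs power_mono)
    thus ?thesis unfolding W_def by (simp add: power_mult_distrib)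
  qed
  have t1: "(a*Yv)^2/2 / Yv \<ge> cs/2 * U"
  proof -
    have "(a*Yv)^2/2 / Yv = a^2 * Yv / 2" using Ypos by (simp add: power2_eq_square)
    moreover have "a^2 * (cs * (norm s)^2) \<le> a^2 * Yv" using Y unfolding Yv_def by (simp add: mult_left_mono)
    moreover have "U = a^2 * (norm s)^2" unfolding U_def by (simp add: power_mult_distrib)
    ultimately show ?thesis by (simp add: algebra_simps)
  qed
  have t2: "(y \<bullet> w)^2 / Yv \<le> Lc^2/cs * W"
  proof -
    have "(y \<bullet> w)^2 / Yv \<le> Lc^2 * (norm s)^2 * W / (cs * (norm s)^2)"
      apply (rule frac_le)
      using yw Y Ypos c ns W0 unfolding Yv_def by auto
    also have "\<dots> = Lc^2/cs * W" using ns by (simp add: field_simps)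
    finally show ?thesis .
  qed
  have "(y \<bullet> v)^2 / Yv \<ge> ((a*Yv)^2/2 - (y \<bullet> w)^2) / Yv"
    using sq Ypos by (simp add: divide_right_mono)
  hence "(y \<bullet> v)^2 / Yv \<ge> cs/2 * U - Lc^2/cs * W" using t1 t2 by (simp add: diff_divide_distrib)
  hence A2: "A \<ge> m * W + cs/2 * U - Lc^2/cs * W" unfolding A W_def using low[of w] by linarith
  define K where "K = Lc^2/(cs*m)"
  have K0: "0 \<le> K" unfolding K_def using c m by simp
  have "K * A \<ge> K * (m * W)" using A1 K0 by (simp add: mult_left_mono)
  moreover have "K * (m*W) = Lc^2/cs * W" unfolding K_def using m by (simp add: field_simps)
  ultimately have KA: "(K+1) * A \<ge> m * W + cs/2 * U" using A2 by (simp add: algebra_simps)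
  define \<mu> where "\<mu> = min m (cs/2)"
  have mu0: "0 \<le> \<mu>" unfolding \<mu>_def using m c by simp
  have "\<mu> * W \<le> m * W" unfolding \<mu>_def using W0 by (intro mult_right_mono) auto
  moreover have "\<mu> * U \<le> cs/2 * U" unfolding \<mu>_def using U0 by (intro mult_right_mono) auto
  ultimately have mWU: "m * W + cs/2 * U \<ge> \<mu> * (W + U)" by (simp add: distrib_left)
  have nv: "(norm v)^2 / 2 \<le> W + U"
  proof -
    have "v = w + a *\<^sub>R s" unfolding w_def by simp
    hence "norm v \<le> norm w + norm (a *\<^sub>R s)" by (metis norm_triangle_ineq)
    hence "(norm v)^2 \<le> (norm w + norm (a *\<^sub>R s))^2" by (simp add: power_mono)
    moreover have "2 * ((norm w)^2 + (norm (a *\<^sub>R s))^2) - (norm w + norm (a *\<^sub>R s))^2 = (norm w - norm (a *\<^sub>R s))^2"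
      by (simp add: power2_eq_square algebra_simps)
    moreover have "0 \<le> (norm w - norm (a *\<^sub>R s))^2" by simp
    ultimately show ?thesis unfolding W_def U_def
      using aux_lin[of "(norm v)^2" "(norm w + norm (a *\<^sub>R s))^2" "(norm w)^2" "(norm (a *\<^sub>R s))^2" "(norm w - norm (a *\<^sub>R s))^2"]
      by blast
  qed
  have "\<mu> * ((norm v)^2 / 2) \<le> \<mu> * (W + U)" using nv mu0 by (rule mult_left_mono)
  hence KA2: "\<mu> * ((norm v)^2 / 2) \<le> A * (K+1)" using KA mWU by (simp add: mult.commute)
  have "\<mu> * ((norm v)^2 / 2) / (K+1) \<le> A" using KA2 K0 by (simp add: pos_divide_le_eq algebra_simps)
  moreover have "\<mu> * ((norm v)^2 / 2) / (K+1) = Fl cs Lc m * (norm v)^2"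
    unfolding Fl_def K_def \<mu>_def by (simp add: field_simps)
  ultimately show ?thesis unfolding A_def by simp
qed


lemma upd_upper:
  fixes B :: "'a::real_inner \<Rightarrow> 'a"
  assumes low: "\<And>v. m * (norm v)^2 \<le> v \<bullet> B v" and up: "\<And>v. norm (B v) \<le> M * norm v"
    and m: "0 < m" and c: "0 < cs" and Y: "cs * (norm s)^2 \<le> y \<bullet> s"
    and yL: "norm y \<le> Lc * norm s" and s0: "s \<noteq> 0"
  shows "norm (lbfgs_update B s y v) \<le> Gu cs Lc m M * norm v"
proof -
  have ns: "0 < norm s" using s0 by simp
  have csp: "0 < cs * (norm s)^2" using c ns by simp
  hence Ypos: "0 < y \<bullet> s" using Y by linarith
  have bpos: "m * (norm s)^2 \<le> s \<bullet> B s" by (rule low)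
  have mp: "0 < m * (norm s)^2" using m ns by simp
  hence bp: "0 < s \<bullet> B s" using bpos by linarith
  have Lc0: "0 \<le> Lc" using yL ns by (smt (verit) norm_ge_zero zero_le_mult_iff)
  have M0: "0 \<le> M" using up[of s] ns by (smt (verit) norm_ge_zero zero_le_mult_iff)
  have t1: "norm (((y \<bullet> v) / (y \<bullet> s)) *\<^sub>R y) \<le> Lc^2/cs * norm v"
  proof -
    have num: "\<bar>y \<bullet> v\<bar> * norm y \<le> (Lc * norm s * norm v) * (Lc * norm s)"
    proof (rule mult_mono)
      have "\<bar>y \<bullet> v\<bar> \<le> norm y * norm v" by (rule Cauchy_Schwarz_ineq2)
      also have "\<dots> \<le> Lc * norm s * norm v" using yL by (simp add: mult_right_mono)
      finally show "\<bar>y \<bullet> v\<bar> \<le> Lc * norm s * norm v" .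
    qed (use yL Lc0 in auto)
    have "norm (((y \<bullet> v) / (y \<bullet> s)) *\<^sub>R y) = \<bar>y \<bullet> v\<bar> * norm y / (y \<bullet> s)" using Ypos by simp
    also have "\<dots> \<le> (Lc * norm s * norm v) * (Lc * norm s) / (cs * (norm s)^2)"
      by (rule frac_le) (use num Y csp Lc0 in auto)
    also have "\<dots> = Lc^2/cs * norm v" using ns by (simp add: field_simps power2_eq_square)
    finally show ?thesis .
  qed
  have t2: "norm (((s \<bullet> B v) / (s \<bullet> B s)) *\<^sub>R B s) \<le> M^2/m * norm v"
  proof -
    have num: "\<bar>s \<bullet> B v\<bar> * norm (B s) \<le> (norm s * (M * norm v)) * (M * norm s)"
    proof (rule mult_mono)
      have "\<bar>s \<bullet> B v\<bar> \<le> norm s * norm (B v)" by (rule Cauchy_Schwarz_ineq2)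
      also have "\<dots> \<le> norm s * (M * norm v)" using up by (simp add: mult_left_mono)
      finally show "\<bar>s \<bullet> B v\<bar> \<le> norm s * (M * norm v)" .
    qed (use up M0 in auto)
    have "norm (((s \<bullet> B v) / (s \<bullet> B s)) *\<^sub>R B s) = \<bar>s \<bullet> B v\<bar> * norm (B s) / (s \<bullet> B s)" using bp by simp
    also have "\<dots> \<le> (norm s * (M * norm v)) * (M * norm s) / (m * (norm s)^2)"
      by (rule frac_le) (use num bpos mp M0 in auto)
    also have "\<dots> = M^2/m * norm v" using ns by (simp add: field_simps power2_eq_square)
    finally show ?thesis .
  qed
  have "norm (lbfgs_update B s y v) \<le> norm (B v + ((y \<bullet> v) / (y \<bullet> s)) *\<^sub>R y) + norm (((s \<bullet> B v) / (s \<bullet> B s)) *\<^sub>R B s)"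
    unfolding upd_apply by (rule norm_triangle_ineq4)
  also have "\<dots> \<le> norm (B v) + norm (((y \<bullet> v) / (y \<bullet> s)) *\<^sub>R y) + norm (((s \<bullet> B v) / (s \<bullet> B s)) *\<^sub>R B s)"
    using norm_triangle_ineq[of "B v" "((y \<bullet> v) / (y \<bullet> s)) *\<^sub>R y"] by linarith
  also have "\<dots> \<le> M * norm v + Lc^2/cs * norm v + M^2/m * norm v" using up t1 t2 by (intro add_mono)
  finally show ?thesis unfolding Gu_def by (simp add: algebra_simps)
qed


definition goodop :: "real \<Rightarrow> real \<Rightarrow> ('a::real_inner \<Rightarrow> 'a) \<Rightarrow> bool" where
  "goodop m M B \<longleftrightarrow> linear B \<and> symop B \<and> (\<forall>v. m * (norm v)^2 \<le> v \<bullet> B v) \<and> (\<forall>v. norm (B v) \<le> M * norm v)"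

lemma goodop_weaken: "goodop m M (B::'a::real_inner \<Rightarrow> 'a) \<Longrightarrow> m' \<le> m \<Longrightarrow> M \<le> M' \<Longrightarrow> goodop m' M' B"
  unfolding goodop_def
proof (intro conjI allI; (elim conjE)?)
  fix v :: 'a assume "\<forall>v. m * (norm v)^2 \<le> v \<bullet> B v" "m' \<le> m"
  moreover have "m' * (norm v)^2 \<le> m * (norm v)^2" using \<open>m' \<le> m\<close> by (simp add: mult_right_mono)
  ultimately show "m' * (norm v)^2 \<le> v \<bullet> B v" by (meson order_trans)
next
  fix v :: 'a assume "\<forall>v. norm (B v) \<le> M * norm v" "M \<le> M'"
  moreover have "M * norm v \<le> M' * norm v" using \<open>M \<le> M'\<close> by (simp add: mult_right_mono)
  ultimately show "norm (B v) \<le> M' * norm v" by (meson order_trans)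
qed

fun lb :: "real \<Rightarrow> real \<Rightarrow> real \<Rightarrow> nat \<Rightarrow> real" where
  "lb cs Lc m 0 = m" | "lb cs Lc m (Suc n) = Fl cs Lc (lb cs Lc m n)"
fun ub :: "real \<Rightarrow> real \<Rightarrow> real \<Rightarrow> real \<Rightarrow> nat \<Rightarrow> real" where
  "ub cs Lc m M 0 = M" | "ub cs Lc m M (Suc n) = Gu cs Lc (lb cs Lc m n) (ub cs Lc m M n)"

lemma lb_shift: "lb cs Lc m (Suc n) = lb cs Lc (Fl cs Lc m) n"
  by (induction n) auto
lemma ub_shift: "ub cs Lc m M (Suc n) = ub cs Lc (Fl cs Lc m) (Gu cs Lc m M) n"
  by (induction n) (auto simp: lb_shift[symmetric])

lemma lb_pos: "0 < m \<Longrightarrow> 0 < cs \<Longrightarrow> 0 < lb cs Lc m n"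
  by (induction n) (auto intro: Fl_pos)

lemma lb_anti: "0 < m \<Longrightarrow> 0 < cs \<Longrightarrow> n \<le> n' \<Longrightarrow> lb cs Lc m n' \<le> lb cs Lc m n"
proof (induction n' rule: nat_induct)
  case 0 then show ?case by simp
next
  case (Suc k)
  show ?case
  proof (cases "n = Suc k")
    case True then show ?thesis by simp
  next
    case False
    hence "n \<le> k" using Suc.prems by simp
    have "lb cs Lc m (Suc k) \<le> lb cs Lc m k" using Fl_le[OF lb_pos[OF Suc.prems(1,2)] Suc.prems(2)] by simp
    also have "\<dots> \<le> lb cs Lc m n" using Suc.IH Suc.prems \<open>n \<le> k\<close> by simp
    finally show ?thesis .
  qed
qed

lemma Gu_ge: "0 < m \<Longrightarrow> 0 < cs \<Longrightarrow> M \<le> Gu cs Lc m M"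
  unfolding Gu_def by (simp add: add_nonneg_nonneg)

lemma ub_mono: "0 < m \<Longrightarrow> 0 < cs \<Longrightarrow> n \<le> n' \<Longrightarrow> ub cs Lc m M n \<le> ub cs Lc m M n'"
proof (induction n' rule: nat_induct)
  case 0 then show ?case by simp
next
  case (Suc k)
  show ?case
  proof (cases "n = Suc k")
    case True then show ?thesis by simp
  next
    case False
    hence "n \<le> k" using Suc.prems by simp
    have "ub cs Lc m M n \<le> ub cs Lc m M k" using Suc.IH Suc.prems \<open>n \<le> k\<close> by simp
    also have "\<dots> \<le> ub cs Lc m M (Suc k)" using Gu_ge[OF lb_pos[OF Suc.prems(1,2)] Suc.prems(2)] by simp
    finally show ?thesis .
  qed
qed

lemma fold_psd:
  assumes "linear B" "symop B" "psdop B" "\<forall>j\<in>set js. P j \<longrightarrow> 0 \<le> yj j \<bullet> sj j"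
  shows "linear (foldl (\<lambda>B j. if P j then lbfgs_update B (sj j) (yj j) else B) B js) \<and>
         symop (foldl (\<lambda>B j. if P j then lbfgs_update B (sj j) (yj j) else B) B js) \<and>
         psdop (foldl (\<lambda>B j. if P j then lbfgs_update B (sj j) (yj j) else B) B js)"
  using assms
proof (induction js arbitrary: B)
  case Nil then show ?case by simp
next
  case (Cons j js)
  let ?B = "if P j then lbfgs_update B (sj j) (yj j) else B"
  have "linear ?B \<and> symop ?B \<and> psdop ?B"
    using Cons.prems upd_linear upd_sym upd_psd by auto
  thus ?case using Cons.IH[of ?B] Cons.prems(4) by simp
qed

lemma good_step:
  assumes "goodop m M B" "0 < m" "0 < cs"
    and "P j \<longrightarrow> cs * (norm (sj j))^2 \<le> yj j \<bullet> sj j \<and> norm (yj j) \<le> Lc * norm (sj j) \<and> sj j \<noteq> 0"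
  shows "goodop (Fl cs Lc m) (Gu cs Lc m M) (if P j then lbfgs_update B (sj j) (yj j) else B)"
proof (cases "P j")
  case True
  have g: "linear B" "symop B" "\<And>v. m * (norm v)^2 \<le> v \<bullet> B v" "\<And>v. norm (B v) \<le> M * norm v"
    using assms(1) unfolding goodop_def by auto
  show ?thesis using True assms(4) unfolding goodop_def
    using upd_linear[OF g(1)] upd_sym[OF g(2)] upd_lower[OF g(1,2,3) assms(2,3)] upd_upper[OF g(3,4) assms(2,3)]
    by auto
next
  case False
  then show ?thesis using goodop_weaken[OF assms(1) Fl_le[OF assms(2,3)] Gu_ge[OF assms(2,3)]] by simp
qed

lemma fold_good:
  assumes "goodop m M B" "0 < m" "0 < cs"
    and "\<forall>j\<in>set js. P j \<longrightarrow> cs * (norm (sj j))^2 \<le> yj j \<bullet> sj j \<and> norm (yj j) \<le> Lc * norm (sj j) \<and> sj j \<noteq> 0"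
  shows "goodop (lb cs Lc m (length js)) (ub cs Lc m M (length js))
           (foldl (\<lambda>B j. if P j then lbfgs_update B (sj j) (yj j) else B) B js)"
  using assms
proof (induction js arbitrary: B m M)
  case Nil then show ?case by simp
next
  case (Cons j js)
  let ?B = "if P j then lbfgs_update B (sj j) (yj j) else B"
  have gB: "goodop (Fl cs Lc m) (Gu cs Lc m M) ?B"
    using Cons.prems(4) by (intro good_step[OF Cons.prems(1-3)]) simp
  have "goodop (lb cs Lc (Fl cs Lc m) (length js)) (ub cs Lc (Fl cs Lc m) (Gu cs Lc m M) (length js))
      (foldl (\<lambda>B j. if P j then lbfgs_update B (sj j) (yj j) else B) ?B js)"
    using Cons.IH[OF gB Fl_pos[OF Cons.prems(2,3)] Cons.prems(3)] Cons.prems(4) by simp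
  then show ?case by (simp only: length_Cons foldl_Cons lb_shift ub_shift)
qed


lemma line_deriv:
  fixes J :: "'a::real_inner \<Rightarrow> real"
  assumes deriv: "\<And>v. (J has_derivative (\<lambda>h. grad v \<bullet> h)) (at v)"
  shows "((\<lambda>s. J (x + s *\<^sub>R d)) has_real_derivative (grad (x + s *\<^sub>R d) \<bullet> d)) (at s within S)"
proof -
  have l: "((\<lambda>s. x + s *\<^sub>R d) has_derivative (\<lambda>h. h *\<^sub>R d)) (at s within S)"
    by (auto intro!: derivative_eq_intros)
  have "((\<lambda>s. J (x + s *\<^sub>R d)) has_derivative (\<lambda>h. grad (x + s *\<^sub>R d) \<bullet> (h *\<^sub>R d))) (at s within S)"
    using has_derivative_compose[OF l deriv] .
  moreover have "(\<lambda>h. grad (x + s *\<^sub>R d) \<bullet> (h *\<^sub>R d)) = (*) (grad (x + s *\<^sub>R d) \<bullet> d)"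
    by (auto simp: mult.commute)
  ultimately show ?thesis unfolding has_field_derivative_def by simp
qed

lemma armijo_fail_bound:
  fixes J :: "'a::real_inner \<Rightarrow> real"
  assumes deriv: "\<And>v. (J has_derivative (\<lambda>h. grad v \<bullet> h)) (at v)"
    and lip: "L-lipschitz_on {v. J v \<le> lev} grad"
    and x: "J x \<le> lev" and gd: "grad x \<bullet> d < 0" and t: "0 < t" and sg: "sgm < 1" and s0: "0 < sgm"
    and fail: "J x + t * sgm * (grad x \<bullet> d) < J (x + t *\<^sub>R d)"
  shows "(1 - sgm) * (- (grad x \<bullet> d)) \<le> L * t * (norm d)^2"
proof -
  define g where "g = grad x \<bullet> d"
  define \<psi> where "\<psi> s = J (x + s *\<^sub>R d) - J x - s * sgm * g" for s
  have D: "(\<psi> has_real_derivative (grad (x + s *\<^sub>R d) \<bullet> d - sgm * g)) (at s)" for s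
    unfolding \<psi>_def
    by (rule derivative_eq_intros line_deriv[OF deriv] | simp)+
  have p0: "\<psi> 0 = 0" unfolding \<psi>_def by simp
  have pt: "\<psi> t > 0" unfolding \<psi>_def g_def using fail by simp
  have "(grad (x + 0 *\<^sub>R d) \<bullet> d - sgm * g) = (1 - sgm) * g" unfolding g_def by (simp add: algebra_simps)
  hence D0: "(\<psi> has_real_derivative ((1 - sgm) * g)) (at 0)" using D[of 0] by simp
  have neg: "(1 - sgm) * g < 0" using sg gd unfolding g_def by (simp add: mult_pos_neg)
  obtain e where e: "e > 0" "\<forall>h>0. h < e \<longrightarrow> \<psi> 0 > \<psi> (0 + h)"
    using DERIV_neg_dec_right[OF D0 neg] by blast
  define h where "h = min (e/2) (t/2)"
  have h: "0 < h" "h < e" "h < t" unfolding h_def using e t by auto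
  have ph: "\<psi> h < 0" using e(2) h p0 by auto
  have cont: "continuous_on {0..t} \<psi>"
    by (rule continuous_at_imp_continuous_on) (meson D DERIV_isCont)
  obtain \<xi> where xi: "\<xi> \<in> {0..t}" "\<forall>y\<in>{0..t}. \<psi> \<xi> \<le> \<psi> y"
    using continuous_attains_inf[OF compact_Icc _ cont] t by auto
  have "\<psi> \<xi> \<le> \<psi> h" using xi(2) h by auto
  hence pxi: "\<psi> \<xi> < 0" using ph by linarith
  have xi0: "0 < \<xi>" using xi pxi p0 by (cases "\<xi> = 0") auto
  have xit: "\<xi> < t" using xi pxi pt by (cases "\<xi> = t") auto
  have "grad (x + \<xi> *\<^sub>R d) \<bullet> d - sgm * g = 0"
  proof (rule DERIV_local_min[OF D[of \<xi>]])
    show "0 < min \<xi> (t - \<xi>)" using xi0 xit by simp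
    show "\<forall>y. \<bar>\<xi> - y\<bar> < min \<xi> (t - \<xi>) \<longrightarrow> \<psi> \<xi> \<le> \<psi> y"
      using xi(2) by (auto simp: abs_if split: if_splits)
  qed
  hence eq: "(grad (x + \<xi> *\<^sub>R d) - grad x) \<bullet> d = (1 - sgm) * (- g)"
    unfolding g_def by (simp add: inner_diff_left algebra_simps)
  have "J (x + \<xi> *\<^sub>R d) < J x + \<xi> * sgm * g" using pxi unfolding \<psi>_def by simp
  moreover have "\<xi> * sgm * g \<le> 0"
    using xi0 s0 gd unfolding g_def by (simp add: mult_nonneg_nonpos)
  ultimately have inO: "J (x + \<xi> *\<^sub>R d) \<le> lev" using x by linarith
  have "(1 - sgm) * (- g) \<le> norm (grad (x + \<xi> *\<^sub>R d) - grad x) * norm d"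
    unfolding eq[symmetric] by (rule norm_cauchy_schwarz)
  also have "\<dots> \<le> (L * norm (\<xi> *\<^sub>R d)) * norm d"
  proof (rule mult_right_mono)
    show "norm (grad (x + \<xi> *\<^sub>R d) - grad x) \<le> L * norm (\<xi> *\<^sub>R d)"
      using lipschitz_onD[OF lip, of "x + \<xi> *\<^sub>R d" x] inO x by (simp add: dist_norm)
  qed simp
  also have "\<dots> = L * \<xi> * (norm d)^2" using xi0 by (simp add: power2_eq_square)
  also have "\<dots> \<le> L * t * (norm d)^2"
    using xit lipschitz_on_nonneg[OF lip] by (intro mult_right_mono mult_left_mono) auto
  finally show ?thesis unfolding g_def .
qed

lemma psd_norm_sq:
  assumes "linear B" "symop B" "psdop B" "\<And>v. norm (B v) \<le> N * norm v"
  shows "(norm (B v))^2 \<le> N * (v \<bullet> B v)"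
proof -
  have cs: "(B v \<bullet> B v)^2 \<le> (v \<bullet> B v) * (B v \<bullet> B (B v))" by (rule cs_semi[OF assms(1-3)])
  have "B v \<bullet> B (B v) \<le> norm (B v) * norm (B (B v))" by (rule norm_cauchy_schwarz)
  also have "\<dots> \<le> norm (B v) * (N * norm (B v))" by (rule mult_left_mono[OF assms(4)]) simp
  finally have b: "B v \<bullet> B (B v) \<le> N * (norm (B v))^2" by (simp add: power2_eq_square algebra_simps)
  have vb: "0 \<le> v \<bullet> B v" using assms(3) unfolding psdop_def by simp
  have "((norm (B v))^2)^2 \<le> (v \<bullet> B v) * (N * (norm (B v))^2)"
    using cs mult_left_mono[OF b vb] by (simp add: power2_norm_eq_inner[symmetric])
  hence key: "(norm (B v))^2 * (norm (B v))^2 \<le> (N * (v \<bullet> B v)) * (norm (B v))^2"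
    by (simp add: power2_eq_square algebra_simps)
  moreover have "0 \<le> N * (v \<bullet> B v)"
  proof (cases "B v = 0")
    case True
    then show ?thesis using calculation vb by (metis assms(2) inner_zero_left inner_zero_right mult_zero_right order_refl symop_def)
  next
    case False
    thus ?thesis using calculation by (smt (verit) mult_right_le_imp_le zero_less_norm_iff zero_less_power zero_le_power2)
  qed
  ultimately show ?thesis
  proof (cases "B v = 0")
    case False
    then show ?thesis using mult_right_le_imp_le[OF key] by simp
  qed simp
qed


typedef ('a::"{real_normed_vector,complete_space}") wr = "UNIV :: 'a set" morphisms unwr wr by simp

setup_lifting type_definition_wr

instantiation wr :: ("{real_normed_vector,complete_space}") real_normed_vector
begin
lift_definition zero_wr :: "'a wr" is 0 .
lift_definition plus_wr :: "'a wr \<Rightarrow> 'a wr \<Rightarrow> 'a wr" is "(+)" .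
lift_definition minus_wr :: "'a wr \<Rightarrow> 'a wr \<Rightarrow> 'a wr" is "(-)" .
lift_definition uminus_wr :: "'a wr \<Rightarrow> 'a wr" is uminus .
lift_definition scaleR_wr :: "real \<Rightarrow> 'a wr \<Rightarrow> 'a wr" is scaleR .
lift_definition norm_wr :: "'a wr \<Rightarrow> real" is norm .
lift_definition sgn_wr :: "'a wr \<Rightarrow> 'a wr" is sgn .
lift_definition dist_wr :: "'a wr \<Rightarrow> 'a wr \<Rightarrow> real" is dist .
definition uniformity_wr :: "('a wr \<times> 'a wr) filter" where
  "uniformity_wr = (INF e\<in>{0 <..}. principal {(x, y). dist x y < e})"
definition open_wr :: "'a wr set \<Rightarrow> bool" where
  "open_wr U \<longleftrightarrow> (\<forall>x\<in>U. eventually (\<lambda>(x', y). x' = x \<longrightarrow> y \<in> U) uniformity)"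
instance
proof
  show "uniformity = (INF e\<in>{0 <..}. principal {(x::'a wr, y). dist x y < e})" by (simp add: uniformity_wr_def)
  show "open U \<longleftrightarrow> (\<forall>x\<in>U. eventually (\<lambda>(x', y). x' = x \<longrightarrow> y \<in> U) uniformity)" for U :: "'a wr set"
    by (simp add: open_wr_def)
qed (transfer; auto simp: algebra_simps scaleR_add_right scaleR_add_left sgn_div_norm dist_norm norm_triangle_ineq)+
end

instance wr :: ("{real_normed_vector,complete_space}") complete_space
proof
  fix X :: "nat \<Rightarrow> 'a wr"
  assume "Cauchy X"
  hence "Cauchy (\<lambda>n. unwr (X n))" unfolding Cauchy_def by (simp add: dist_wr.rep_eq)
  then obtain l where l: "(\<lambda>n. unwr (X n)) \<longlonglongrightarrow> l" using Cauchy_convergent_iff convergent_def by blast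
  have "X \<longlonglongrightarrow> wr l"
    unfolding LIMSEQ_def dist_wr.rep_eq using l[unfolded LIMSEQ_def] by (simp add: wr_inverse)
  thus "convergent X" unfolding convergent_def by blast
qed

instance wr :: ("{real_normed_vector,complete_space}") banach ..


lemma wr_add: "wr (x + y) = wr x + wr y" by (metis plus_wr.rep_eq unwr_inverse wr_inverse UNIV_I)
lemma wr_scale: "wr (r *\<^sub>R x) = r *\<^sub>R wr x" by (metis scaleR_wr.rep_eq unwr_inverse wr_inverse UNIV_I)
lemma norm_wr: "norm (wr x) = norm x" by (simp add: norm_wr.rep_eq wr_inverse)
lemma unwr_add: "unwr (x + y) = unwr x + unwr y" by (rule plus_wr.rep_eq)
lemma unwr_scale: "unwr (r *\<^sub>R x) = r *\<^sub>R unwr x" by (rule scaleR_wr.rep_eq)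
lemma norm_unwr: "norm (unwr x) = norm x" by (simp add: norm_wr.rep_eq)

definition Psi :: "('a::{real_normed_vector,complete_space} \<Rightarrow>\<^sub>L 'a) \<Rightarrow> ('a wr \<Rightarrow>\<^sub>L 'a wr)" where
  "Psi B = Blinfun (\<lambda>w. wr (blinfun_apply B (unwr w)))"
definition Phi :: "('a::{real_normed_vector,complete_space} wr \<Rightarrow>\<^sub>L 'a wr) \<Rightarrow> ('a \<Rightarrow>\<^sub>L 'a)" where
  "Phi A = Blinfun (\<lambda>v. unwr (blinfun_apply A (wr v)))"

lemma bl_Psi: "bounded_linear (\<lambda>w. wr (blinfun_apply B (unwr w)))"
  by (rule bounded_linear_intro[where K="norm B"])
     (auto simp: unwr_add unwr_scale wr_add wr_scale blinfun.add_right blinfun.scaleR_right norm_wr norm_unwr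
           intro: order_trans[OF norm_blinfun] simp: mult.commute)

lemma bl_Phi: "bounded_linear (\<lambda>v. unwr (blinfun_apply A (wr v)))"
  by (rule bounded_linear_intro[where K="norm A"])
     (auto simp: unwr_add unwr_scale wr_add wr_scale blinfun.add_right blinfun.scaleR_right norm_wr norm_unwr
           intro: order_trans[OF norm_blinfun] simp: mult.commute)

lemma Psi_apply: "blinfun_apply (Psi B) w = wr (blinfun_apply B (unwr w))"
  unfolding Psi_def by (simp add: bounded_linear_Blinfun_apply[OF bl_Psi])
lemma Phi_apply: "blinfun_apply (Phi A) v = unwr (blinfun_apply A (wr v))"
  unfolding Phi_def by (simp add: bounded_linear_Blinfun_apply[OF bl_Phi])

lemma Phi_Psi: "Phi (Psi B) = B"
  by (rule blinfun_eqI) (simp add: Phi_apply Psi_apply wr_inverse)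

lemma bl_Psi_op: "bounded_linear Psi"
proof (rule bounded_linear_intro[where K=1])
  show "Psi (x + y) = Psi x + Psi y" for x y
    by (rule blinfun_eqI) (simp add: Psi_apply blinfun.add_left wr_add)
  show "Psi (r *\<^sub>R x) = r *\<^sub>R Psi x" for r x
    by (rule blinfun_eqI) (simp add: Psi_apply blinfun.scaleR_left wr_scale)
  show "norm (Psi x) \<le> norm x * 1" for x
    by (simp, rule norm_blinfun_bound) (auto simp: Psi_apply norm_wr norm_unwr intro: order_trans[OF norm_blinfun] simp: norm_blinfun)
qed

lemma bl_Phi_op: "bounded_linear Phi"
proof (rule bounded_linear_intro[where K=1])
  show "Phi (x + y) = Phi x + Phi y" for x y
    by (rule blinfun_eqI) (simp add: Phi_apply blinfun.add_left unwr_add)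
  show "Phi (r *\<^sub>R x) = r *\<^sub>R Phi x" for r x
    by (rule blinfun_eqI) (simp add: Phi_apply blinfun.scaleR_left unwr_scale)
  show "norm (Phi x) \<le> norm x * 1" for x
    by (simp, rule norm_blinfun_bound) (auto simp: Phi_apply norm_wr norm_unwr intro: order_trans[OF norm_blinfun] simp: norm_blinfun)
qed

lemma integrable_blinfun_cont:
  fixes f :: "real \<Rightarrow> ('a::{real_normed_vector,complete_space} \<Rightarrow>\<^sub>L 'a)"
  assumes "continuous_on {a..b} f"
  shows "f integrable_on {a..b}"
proof -
  have "continuous_on {a..b} (Psi \<circ> f)"
    by (rule continuous_on_compose[OF assms]) (rule linear_continuous_on[OF bl_Psi_op])
  then obtain I where "((Psi \<circ> f) has_integral I) {a..b}"
    using integrable_continuous_interval by blast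
  from has_integral_linear[OF this bl_Phi_op]
  have "((Phi \<circ> (Psi \<circ> f)) has_integral Phi I) {a..b}" .
  moreover have "Phi \<circ> (Psi \<circ> f) = f" by (auto simp: Phi_Psi)
  ultimately show ?thesis by (auto simp: integrable_on_def)
qed


lemma grad_integral:
  fixes grad :: "'a::{real_inner,complete_space} \<Rightarrow> 'a" and H :: "'a \<Rightarrow> ('a \<Rightarrow>\<^sub>L 'a)"
  assumes H: "\<forall>v. (grad has_derivative blinfun_apply (H v)) (at v)" "continuous_on UNIV H" "continuous_on UNIV grad"
  shows "grad (a + s) - grad a = blinfun_apply (integral {0..1} (\<lambda>t::real. H (a + t *\<^sub>R s))) s"
proof -
  have vd: "((\<lambda>t. grad (a + t *\<^sub>R s)) has_vector_derivative blinfun_apply (H (a + t *\<^sub>R s)) s) (at t)" for t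
  proof -
    have l: "((\<lambda>t. a + t *\<^sub>R s) has_derivative (\<lambda>h. h *\<^sub>R s)) (at t)"
      by (auto intro!: derivative_eq_intros)
    have "((\<lambda>t. grad (a + t *\<^sub>R s)) has_derivative (\<lambda>h. blinfun_apply (H (a + t *\<^sub>R s)) (h *\<^sub>R s))) (at t)"
      using has_derivative_compose[OF l H(1)[rule_format]] .
    thus ?thesis unfolding has_vector_derivative_def by (simp add: blinfun.scaleR_right)
  qed
  have ftc: "((\<lambda>t. blinfun_apply (H (a + t *\<^sub>R s)) s) has_integral (grad (a + 1 *\<^sub>R s) - grad (a + 0 *\<^sub>R s))) {0..1}"
  proof (rule fundamental_theorem_of_calculus_interior)
    show "continuous_on {0..1} (\<lambda>t. grad (a + t *\<^sub>R s))"
      by (rule continuous_on_compose2[OF H(3)]) (auto intro!: continuous_intros)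
  qed (use vd in auto)
  have cont: "continuous_on {0..1} (\<lambda>t::real. H (a + t *\<^sub>R s))"
    by (rule continuous_on_compose2[OF H(2)]) (auto intro!: continuous_intros)
  have int: "(\<lambda>t::real. H (a + t *\<^sub>R s)) integrable_on {0..1}"
    by (rule integrable_blinfun_cont[OF cont])
  show ?thesis
    unfolding blinfun_apply_integral[OF int] using integral_unique[OF ftc] by simp
qed

lemma tau_ok_unfold:
  "slbfgs_tau_ok gv c0 C0 c1 c2 g s z t \<longleftrightarrow>
     (let wl = min c0 (c1 * norm g powr c2);
          wu = max C0 (ereal (inverse (c1 * norm g powr c2)));
          P = (\<lambda>r::real. min (max (ereal r) (ereal wl)) wu)
      in P ((z \<bullet> s) / (norm s)\<^sup>2) \<le> ereal t \<and>
         (if z \<bullet> s > 0 \<and> \<not> gv then ereal t \<le> P ((norm z)\<^sup>2 / (z \<bullet> s))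
          else ereal t \<le> P (norm z / norm s)))"
  unfolding slbfgs_tau_ok_def Let_def by auto

lemma P_ge: "ereal wl \<le> wu \<Longrightarrow> ereal wl \<le> min (max (ereal r) (ereal wl)) wu"
  by (simp add: min.bounded_iff le_max_iff_disj)
lemma P_le1: "min (max (ereal r) (ereal wl)) wu \<le> wu"
  by simp
lemma P_le2: "min (max (ereal r) (ereal wl)) wu \<le> ereal (max r wl)"
  by (rule order_trans[OF min.cobounded1]) (simp add: max_def)

lemma tau_lower:
  assumes "slbfgs_tau_ok gv c0 C0 c1 c2 g s z t" "ereal c0 \<le> C0"
  shows "min c0 (c1 * norm g powr c2) \<le> t"
proof -
  define wl where "wl = min c0 (c1 * norm g powr c2)"
  define wu where "wu = max C0 (ereal (inverse (c1 * norm g powr c2)))"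
  have "ereal wl \<le> ereal c0" unfolding wl_def by simp
  also have "\<dots> \<le> wu" unfolding wu_def using assms(2) by (simp add: le_max_iff_disj)
  finally have "ereal wl \<le> min (max (ereal ((z \<bullet> s) / (norm s)\<^sup>2)) (ereal wl)) wu" by (rule P_ge)
  also have "\<dots> \<le> ereal t" using assms(1) unfolding tau_ok_unfold Let_def wl_def[symmetric] wu_def[symmetric] by simp
  finally have "wl \<le> t" by simp
  thus ?thesis unfolding wl_def .
qed

lemma tau_upper_u:
  assumes "slbfgs_tau_ok gv c0 C0 c1 c2 g s z t"
  shows "ereal t \<le> max C0 (ereal (inverse (c1 * norm g powr c2)))"
  using assms unfolding tau_ok_unfold Let_def
  by (smt (verit) P_le1 order_trans)

lemma tau_upper_z:
  assumes "slbfgs_tau_ok False c0 C0 c1 c2 g s z t" "z \<bullet> s > 0"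
  shows "t \<le> max ((norm z)\<^sup>2 / (z \<bullet> s)) (min c0 (c1 * norm g powr c2))"
proof -
  have "ereal t \<le> min (max (ereal ((norm z)\<^sup>2 / (z \<bullet> s))) (ereal (min c0 (c1 * norm g powr c2)))) (max C0 (ereal (inverse (c1 * norm g powr c2))))"
    using assms unfolding tau_ok_unfold Let_def by simp
  also have "\<dots> \<le> ereal (max ((norm z)\<^sup>2 / (z \<bullet> s)) (min c0 (c1 * norm g powr c2)))" by (rule P_le2)
  finally show ?thesis by (simp only: ereal_less_eq)
qed

lemma tau_upper_g:
  assumes "slbfgs_tau_ok gv c0 C0 c1 c2 g s z t" "gv \<or> \<not> z \<bullet> s > 0"
  shows "t \<le> max (norm z / norm s) (min c0 (c1 * norm g powr c2))"
proof -
  have "ereal t \<le> min (max (ereal (norm z / norm s)) (ereal (min c0 (c1 * norm g powr c2)))) (max C0 (ereal (inverse (c1 * norm g powr c2))))"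
    using assms unfolding tau_ok_unfold Let_def by auto
  also have "\<dots> \<le> ereal (max (norm z / norm s) (min c0 (c1 * norm g powr c2)))" by (rule P_le2)
  finally show ?thesis by (simp only: ereal_less_eq)
qed

lemma count_finite:
  fixes f :: "nat \<Rightarrow> real"
  assumes dec: "\<And>k. f (Suc k) \<le> f k" and big: "\<And>k. k \<in> A \<Longrightarrow> f (Suc k) \<le> f k - \<delta>"
    and d: "0 < \<delta>" and b: "\<And>k. b \<le> f k"
  shows "finite A"
proof (rule ccontr)
  assume inf: "infinite A"
  obtain N :: nat where N: "(f 0 - b) / \<delta> < N" using reals_Archimedean2 by blast
  obtain B where B: "finite B" "card B = N" "B \<subseteq> A" using infinite_arbitrarily_large[OF inf] by blast
  obtain n where n: "B \<subseteq> {..<n}" using B(1) finite_nat_bounded by blast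
  have "real N * \<delta> = (\<Sum>k\<in>B. \<delta>)" using B by simp
  also have "\<dots> \<le> (\<Sum>k\<in>B. f k - f (Suc k))" using B big by (intro sum_mono) force
  also have "\<dots> \<le> (\<Sum>k<n. f k - f (Suc k))" using n dec by (intro sum_mono2) auto
  also have "\<dots> = f 0 - f n" by (rule sum_lessThan_telescope')
  also have "\<dots> \<le> f 0 - b" using b by simp
  finally have "real N * \<delta> \<le> f 0 - b" .
  hence "real N \<le> (f 0 - b) / \<delta>" using d by (simp add: le_divide_eq)
  thus False using N by simp
qed


lemma div_le_helper: "0 \<le> b \<Longrightarrow> 0 \<le> c \<Longrightarrow> a \<le> c * b \<Longrightarrow> a / b \<le> (c::real)"
  by (cases "b = 0") (simp_all add: pos_divide_le_eq mult.commute)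


theorem theorem4p8:
  fixes J :: "'a::{real_inner,complete_space} \<Rightarrow> real"
    and grad :: "'a \<Rightarrow> 'a"
    and eps L c0 cs c1 c2 beta sgm eta :: real
    and C0 :: ereal and ell :: nat and armijo :: bool
    and x d :: "nat \<Rightarrow> 'a" and alpha tau :: "nat \<Rightarrow> real" and S :: "nat \<Rightarrow> ('a \<Rightarrow>\<^sub>L 'a)"
  defines "\<Omega> \<equiv> {v. J v \<le> J (x 0)}"
  assumes params: "0 \<le> eps" "0 \<le> c0" "ereal c0 \<le> C0" "0 < cs" "0 < c1" "0 < c2"
    and ls_params: "0 < sgm" "sgm < 1"
      "armijo \<longrightarrow> 0 < beta \<and> beta < 1"
      "\<not> armijo \<longrightarrow> sgm < eta \<and> eta < 1"
    and run: "slbfgs_run J grad eps ell c0 C0 cs c1 c2 armijo beta sgm eta x d alpha tau S"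
    \<comment> \<open>1) continuously differentiable and bounded below\<close>
    and A1: "\<And>v. (J has_derivative (\<lambda>h. grad v \<bullet> h)) (at v)" "continuous_on UNIV grad"
      "bdd_below (range J)"
    \<comment> \<open>2) gradient Lipschitz on the level set\<close>
    and A2: "0 < L" "L-lipschitz_on \<Omega> grad"
    \<comment> \<open>3) structured parts bounded\<close>
    and A3: "bdd_above (range (\<lambda>k. norm (S k)))"
    \<comment> \<open>4) uniform continuity in the Armijo case\<close>
    and A4: "armijo \<longrightarrow> (\<exists>\<delta>>0.
                 uniformly_continuous_on {v. \<exists>w\<in>\<Omega>. norm (v - w) < \<delta>} J \<or>
                 uniformly_continuous_on {v. \<exists>w\<in>\<Omega>. norm (v - w) < \<delta>} grad)"
    \<comment> \<open>5) c0 = 0 only if the inverses of the seed operators are uniformly bounded\<close>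
    and A5: "c0 = 0 \<longrightarrow> (\<exists>M. \<forall>k. slbfgs_active grad eps x k \<longrightarrow>
                 bij (slbfgs_B0 tau S k) \<and> bounded_linear (inv (slbfgs_B0 tau S k))
                 \<and> onorm (inv (slbfgs_B0 tau S k)) \<le> M)"
    \<comment> \<open>6) C0 = \<infinity> only with the [tau^s, tau^g] variant or the curvature condition\<close>
    and A6: "C0 = \<infinity> \<longrightarrow>
       ((\<forall>k. slbfgs_active grad eps x (Suc k) \<longrightarrow>
            slbfgs_tau_ok True c0 C0 c1 c2 (grad (x (Suc k))) (x (Suc k) - x k)
              ((grad (x (Suc k)) - grad (x k)) - blinfun_apply (S (Suc k)) (x (Suc k) - x k))
              (tau (Suc k)))
        \<or> (\<exists>H :: 'a \<Rightarrow> ('a \<Rightarrow>\<^sub>L 'a).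
              (\<forall>v. (grad has_derivative blinfun_apply (H v)) (at v)) \<and> continuous_on UNIV H \<and>
              (\<forall>k. slbfgs_active grad eps x (Suc k) \<longrightarrow>
                 sym_psd (integral {0..1} (\<lambda>t::real. H (x k + t *\<^sub>R (x (Suc k) - x k))) - S (Suc k))) \<and>
              bdd_above ((\<lambda>k. norm (integral {0..1} (\<lambda>t::real. H (x k + t *\<^sub>R (x (Suc k) - x k)))
                                    - S (Suc k))) ` {k. slbfgs_active grad eps x (Suc k)})))"
  shows "(eps = 0 \<longrightarrow>
            (\<exists>k. grad (x (Suc k)) = 0) \<or>
            ((\<lambda>k. norm (grad (x k))) \<longlonglongrightarrow> 0 \<and>
             (\<forall>xb. (\<exists>r. strict_mono r \<and> (x \<circ> r) \<longlonglongrightarrow> xb) \<longrightarrow> grad xb = 0)))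
       \<and> (0 < eps \<longrightarrow> (\<exists>k. norm (grad (x (Suc k))) \<le> eps))"
proof -
  note tau0 = conjunct1[OF run[unfolded slbfgs_run_def]]
  have Spsd: "\<And>k. sym_psd (S k)" using run unfolding slbfgs_run_def by blast
  have R: "\<And>k. slbfgs_active grad eps x k \<Longrightarrow>
        slbfgs_B grad ell cs tau S x k (d k) = - grad (x k) \<and>
        (if armijo then armijo_backtracking J grad beta sgm (x k) (d k) (alpha k)
         else wolfe_powell J grad sgm eta (x k) (d k) (alpha k)) \<and>
        x (Suc k) = x k + alpha k *\<^sub>R d k \<and>
        (eps < norm (grad (x (Suc k))) \<longrightarrow>
           slbfgs_tau_ok False c0 C0 c1 c2 (grad (x (Suc k))) (x (Suc k) - x k)
             ((grad (x (Suc k)) - grad (x k)) - blinfun_apply (S (Suc k)) (x (Suc k) - x k))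
             (tau (Suc k)))"
    using run unfolding slbfgs_run_def by blast
  have Lnn: "0 \<le> L" using A2 by simp
  obtain SB where SB: "\<And>k. norm (S k) \<le> SB" using A3 unfolding bdd_above_def by auto
  have SB0: "0 \<le> SB" using SB[of 0] norm_ge_zero order_trans by blast
  obtain Jb where Jb: "\<And>v. Jb \<le> J v" using A1(3) unfolding bdd_below_def by auto
  have core: "finite {k. \<epsilon> \<le> norm (grad (x k))}"
    if allact: "\<forall>k. eps < norm (grad (x (Suc k)))" and epos: "0 < \<epsilon>" for \<epsilon>
  proof -
    have act: "\<And>k. slbfgs_active grad eps x k" unfolding slbfgs_active_def using allact by blast
    define sj where "sj j = x (Suc j) - x j" for j
    define yj where "yj j = grad (x (Suc j)) - grad (x j)" for j
    define zj where "zj j = yj j - blinfun_apply (S (Suc j)) (sj j)" for j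
    define st where "st j = slbfgs_stored grad cs x j" for j
    define B0 where "B0 k = slbfgs_B0 tau S k" for k
    define Bk where "Bk k = slbfgs_B grad ell cs tau S x k" for k
    have Bk_fold: "Bk k = foldl (\<lambda>B j. if st j then lbfgs_update B (sj j) (yj j) else B) (B0 k) [k - ell..<k]" for k
      unfolding Bk_def slbfgs_B_def B0_def st_def sj_def yj_def ..
    have Bd: "Bk k (d k) = - grad (x k)" for k using R[OF act] unfolding Bk_def by blast
    have LS: "if armijo then armijo_backtracking J grad beta sgm (x k) (d k) (alpha k)
         else wolfe_powell J grad sgm eta (x k) (d k) (alpha k)" for k using R[OF act] by blast
    have xs: "x (Suc k) = x k + alpha k *\<^sub>R d k" for k using R[OF act] by blast
    have TO: "slbfgs_tau_ok False c0 C0 c1 c2 (grad (x (Suc k))) (sj k) (zj k) (tau (Suc k))" for k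
      using R[OF act] allact unfolding zj_def yj_def sj_def by blast
    have tau_nn: "0 \<le> tau k" for k
    proof (cases k)
      case 0 then show ?thesis using tau0 by simp
    next
      case (Suc j)
      have "min c0 (c1 * norm (grad (x (Suc j))) powr c2) \<le> tau (Suc j)" by (rule tau_lower[OF TO params(3)])
      moreover have "0 \<le> min c0 (c1 * norm (grad (x (Suc j))) powr c2)" using params by simp
      ultimately have "0 \<le> tau (Suc j)" by linarith
      thus ?thesis using Suc by simp
    qed
    have stored: "cs * (norm (sj j))^2 < yj j \<bullet> sj j" if "st j" for j
      using that unfolding st_def slbfgs_stored_def sj_def yj_def by simp
    have st_nn: "0 \<le> yj j \<bullet> sj j" if "st j" for j
      using stored[OF that] params(4) by (smt (verit) mult_nonneg_nonneg zero_le_power2)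
    have st_ne: "sj j \<noteq> 0" if "st j" for j
      using stored[OF that] by auto
    have Sj: "linear (blinfun_apply (S k))" "symop (blinfun_apply (S k))" "psdop (blinfun_apply (S k))" for k
      using Spsd[of k] unfolding sym_psd_def symop_def psdop_def
      by (auto simp: blinfun.bounded_linear_right bounded_linear.linear)
    have B0_apply: "B0 k v = tau k *\<^sub>R v + blinfun_apply (S k) v" for k v
      unfolding B0_def slbfgs_B0_def by simp
    have B0_lin: "linear (B0 k)" for k
    proof -
      have "B0 k = (\<lambda>v. tau k *\<^sub>R v + blinfun_apply (S k) v)" using B0_apply by auto
      thus ?thesis by (simp add: bounded_linear.linear bounded_linear_add bounded_linear_scaleR_right blinfun.bounded_linear_right)
    qed
    have B0_sym: "symop (B0 k)" for k
      using Sj(2)[of k] unfolding symop_def B0_apply by (simp add: inner_add_left inner_add_right)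
    have B0_psd: "psdop (B0 k)" for k
    proof -
      have "0 \<le> v \<bullet> B0 k v" for v
      proof -
        have "v \<bullet> B0 k v = tau k * (v \<bullet> v) + v \<bullet> blinfun_apply (S k) v" unfolding B0_apply by (simp add: inner_add_right)
        moreover have "0 \<le> tau k * (v \<bullet> v)" using tau_nn by simp
        moreover have "0 \<le> v \<bullet> blinfun_apply (S k) v" using Sj(3) unfolding psdop_def by blast
        ultimately show ?thesis by linarith
      qed
      thus ?thesis unfolding psdop_def by blast
    qed
    have Bk_props: "linear (Bk k) \<and> symop (Bk k) \<and> psdop (Bk k)" for k
      unfolding Bk_fold by (rule fold_psd[OF B0_lin B0_sym B0_psd]) (auto intro: st_nn)
    have gd: "grad (x k) \<bullet> d k = - (d k \<bullet> Bk k (d k))" for k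
      using Bd[of k] by (metis inner_commute inner_minus_left minus_minus)
    have gd_nonpos: "grad (x k) \<bullet> d k \<le> 0" for k
      using gd[of k] Bk_props[of k] unfolding psdop_def by auto
    have alpha_pos: "0 < alpha k" for k
    proof (cases armijo)
      case True
      then show ?thesis using LS[of k] ls_params(3) unfolding armijo_backtracking_def by auto
    next
      case False
      then show ?thesis using LS[of k] unfolding wolfe_powell_def by auto
    qed
    have armok: "J (x (Suc k)) \<le> J (x k) + alpha k * sgm * (grad (x k) \<bullet> d k)" for k
      using LS[of k] xs[of k] unfolding armijo_backtracking_def wolfe_powell_def armijo_ok_def
      by (cases armijo) auto
    have Jdec: "J (x (Suc k)) \<le> J (x k)" for k
    proof -
      have "alpha k * sgm * (grad (x k) \<bullet> d k) \<le> 0"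
        using alpha_pos[of k] ls_params(1) gd_nonpos[of k] by (simp add: mult_nonneg_nonpos)
      thus ?thesis using armok[of k] by linarith
    qed
    have inO: "x k \<in> \<Omega>" for k
    proof (induction k)
      case 0 then show ?case unfolding \<Omega>_def by simp
    next
      case (Suc k) then show ?case using Jdec[of k] unfolding \<Omega>_def by simp
    qed
    have yL: "norm (yj j) \<le> L * norm (sj j)" for j
      using lipschitz_onD[OF A2(2) inO[of "Suc j"] inO[of j]] unfolding yj_def sj_def dist_norm .
    have pair: "\<forall>j\<in>set js. st j \<longrightarrow> cs * (norm (sj j))^2 \<le> yj j \<bullet> sj j \<and> norm (yj j) \<le> L * norm (sj j) \<and> sj j \<noteq> 0" for js
      using stored yL st_ne by (auto intro: less_imp_le)
    have tau_suc: "\<exists>T. \<forall>j. \<epsilon> \<le> norm (grad (x (Suc j))) \<longrightarrow> tau (Suc j) \<le> T"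
    proof (cases "C0 = \<infinity>")
      case False
      then obtain C where C: "C0 = ereal C" using params(3) by (cases C0) auto
      show ?thesis
      proof (intro exI allI impI)
        fix j assume ej: "\<epsilon> \<le> norm (grad (x (Suc j)))"
        have "ereal (tau (Suc j)) \<le> max C0 (ereal (inverse (c1 * norm (grad (x (Suc j))) powr c2)))"
          by (rule tau_upper_u[OF TO])
        hence t1: "tau (Suc j) \<le> max C (inverse (c1 * norm (grad (x (Suc j))) powr c2))"
          using C by (simp add: max_def split: if_splits)
        have "0 < c1 * \<epsilon> powr c2" using epos params by simp
        moreover have "c1 * \<epsilon> powr c2 \<le> c1 * norm (grad (x (Suc j))) powr c2"
          using ej epos params by (intro mult_left_mono powr_mono2) auto
        ultimately have "inverse (c1 * norm (grad (x (Suc j))) powr c2) \<le> inverse (c1 * \<epsilon> powr c2)"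
          by (metis le_imp_inverse_le)
        thus "tau (Suc j) \<le> max C (inverse (c1 * \<epsilon> powr c2))" using t1 by (auto simp: max_def split: if_splits)
      qed
    next
      case True
      from A6 True consider
        (g) "\<forall>k. slbfgs_active grad eps x (Suc k) \<longrightarrow>
            slbfgs_tau_ok True c0 C0 c1 c2 (grad (x (Suc k))) (x (Suc k) - x k)
              ((grad (x (Suc k)) - grad (x k)) - blinfun_apply (S (Suc k)) (x (Suc k) - x k))
              (tau (Suc k))"
        | (h) "\<exists>H :: 'a \<Rightarrow> ('a \<Rightarrow>\<^sub>L 'a).
              (\<forall>v. (grad has_derivative blinfun_apply (H v)) (at v)) \<and> continuous_on UNIV H \<and>
              (\<forall>k. slbfgs_active grad eps x (Suc k) \<longrightarrow>
                 sym_psd (integral {0..1} (\<lambda>t::real. H (x k + t *\<^sub>R (x (Suc k) - x k))) - S (Suc k))) \<and>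
              bdd_above ((\<lambda>k. norm (integral {0..1} (\<lambda>t::real. H (x k + t *\<^sub>R (x (Suc k) - x k)))
                                    - S (Suc k))) ` {k. slbfgs_active grad eps x (Suc k)})"
        by blast
      then show ?thesis
      proof cases
        case g
        show ?thesis
        proof (intro exI allI impI)
          fix j
          have TOg: "slbfgs_tau_ok True c0 C0 c1 c2 (grad (x (Suc j))) (sj j) (zj j) (tau (Suc j))"
            using g act unfolding zj_def yj_def sj_def by blast
          have t: "tau (Suc j) \<le> max (norm (zj j) / norm (sj j)) (min c0 (c1 * norm (grad (x (Suc j))) powr c2))"
            by (rule tau_upper_g[OF TOg]) simp
          have "norm (zj j) \<le> norm (yj j) + norm (blinfun_apply (S (Suc j)) (sj j))"
            unfolding zj_def by (rule norm_triangle_ineq4)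
          also have "\<dots> \<le> L * norm (sj j) + SB * norm (sj j)"
            using yL[of j] norm_blinfun[of "S (Suc j)" "sj j"] SB[of "Suc j"]
            by (smt (verit) mult_right_mono norm_ge_zero)
          finally have "norm (zj j) \<le> (L + SB) * norm (sj j)" by (simp add: algebra_simps)
          hence "norm (zj j) / norm (sj j) \<le> L + SB" using Lnn SB0 by (intro div_le_helper) auto
          thus "tau (Suc j) \<le> max (L + SB) c0" using t by (auto simp: max_def min_def split: if_splits)
        qed
      next
        case h
        then obtain H :: "'a \<Rightarrow> ('a \<Rightarrow>\<^sub>L 'a)" where Hd: "\<forall>v. (grad has_derivative blinfun_apply (H v)) (at v)"
          and Hc: "continuous_on UNIV H"
          and Gpsd: "\<forall>k. slbfgs_active grad eps x (Suc k) \<longrightarrow>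
                 sym_psd (integral {0..1} (\<lambda>t::real. H (x k + t *\<^sub>R (x (Suc k) - x k))) - S (Suc k))"
          and Gb: "bdd_above ((\<lambda>k. norm (integral {0..1} (\<lambda>t::real. H (x k + t *\<^sub>R (x (Suc k) - x k)))
                                    - S (Suc k))) ` {k. slbfgs_active grad eps x (Suc k)})"
          by blast
        define G where "G j = integral {0..1} (\<lambda>t::real. H (x j + t *\<^sub>R (x (Suc j) - x j))) - S (Suc j)" for j
        obtain NG where NG: "\<And>j. norm (G j) \<le> NG" using Gb act unfolding bdd_above_def G_def by auto
        have NG0: "0 \<le> NG" using NG[of 0] norm_ge_zero order_trans by blast
        have zG: "zj j = blinfun_apply (G j) (sj j)" for j
        proof -
          have "yj j = blinfun_apply (integral {0..1} (\<lambda>t::real. H (x j + t *\<^sub>R (x (Suc j) - x j)))) (sj j)"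
            using grad_integral[OF Hd Hc A1(2), of "x j" "sj j"] unfolding yj_def sj_def by simp
          thus ?thesis unfolding zj_def G_def by (simp add: blinfun.diff_left)
        qed
        show ?thesis
        proof (intro exI allI impI)
          fix j
          have Gs: "sym_psd (G j)" using Gpsd act unfolding G_def by blast
          have Gp: "linear (blinfun_apply (G j))" "symop (blinfun_apply (G j))" "psdop (blinfun_apply (G j))"
            using Gs unfolding sym_psd_def symop_def psdop_def
            by (auto simp: blinfun.bounded_linear_right bounded_linear.linear)
          have "tau (Suc j) \<le> max NG c0"
          proof (cases "zj j \<bullet> sj j > 0")
            case True
            have t: "tau (Suc j) \<le> max ((norm (zj j))\<^sup>2 / (zj j \<bullet> sj j)) (min c0 (c1 * norm (grad (x (Suc j))) powr c2))"
              by (rule tau_upper_z[OF TO True])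
            have "(norm (zj j))\<^sup>2 \<le> norm (G j) * (sj j \<bullet> blinfun_apply (G j) (sj j))"
              unfolding zG by (rule psd_norm_sq[OF Gp]) (simp add: norm_blinfun)
            also have "\<dots> \<le> NG * (zj j \<bullet> sj j)"
              using NG[of j] True unfolding zG by (simp add: inner_commute mult_right_mono)
            finally have "(norm (zj j))\<^sup>2 / (zj j \<bullet> sj j) \<le> NG" using True by (simp add: pos_divide_le_eq)
            thus ?thesis using t by (auto simp: max_def min_def split: if_splits)
          next
            case False
            have t: "tau (Suc j) \<le> max (norm (zj j) / norm (sj j)) (min c0 (c1 * norm (grad (x (Suc j))) powr c2))"
              by (rule tau_upper_g[OF TO]) (use False in simp)
            have "norm (zj j) \<le> norm (G j) * norm (sj j)" unfolding zG by (rule norm_blinfun)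
            also have "\<dots> \<le> NG * norm (sj j)" using NG[of j] by (simp add: mult_right_mono)
            finally have "norm (zj j) / norm (sj j) \<le> NG" using NG0 by (intro div_le_helper) auto
            thus ?thesis using t by (auto simp: max_def min_def split: if_splits)
          qed
          thus "tau (Suc j) \<le> max NG c0" .
        qed
      qed
    qed
    then obtain T where T: "\<And>j. \<epsilon> \<le> norm (grad (x (Suc j))) \<Longrightarrow> tau (Suc j) \<le> T" by blast
    define TU where "TU = max (tau 0) T"
    have TU: "tau k \<le> TU" if "\<epsilon> \<le> norm (grad (x k))" for k
      using that T unfolding TU_def by (cases k) (auto simp: le_max_iff_disj)
    have TU0: "0 < TU" using tau0 unfolding TU_def by (simp add: less_max_iff_disj)
    define M0 where "M0 = TU + SB"
    have M0pos: "0 < M0" unfolding M0_def using TU0 SB0 by simp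
    have B0_up: "norm (B0 k v) \<le> M0 * norm v" if "\<epsilon> \<le> norm (grad (x k))" for k v
    proof -
      have "norm (B0 k v) \<le> norm (tau k *\<^sub>R v) + norm (blinfun_apply (S k) v)"
        unfolding B0_apply by (rule norm_triangle_ineq)
      also have "\<dots> \<le> TU * norm v + SB * norm v"
      proof (rule add_mono)
        show "norm (tau k *\<^sub>R v) \<le> TU * norm v" using TU[OF that] tau_nn[of k] by (simp add: mult_right_mono)
        show "norm (blinfun_apply (S k) v) \<le> SB * norm v"
          using norm_blinfun[of "S k" v] SB[of k] by (smt (verit) mult_right_mono norm_ge_zero)
      qed
      finally show ?thesis unfolding M0_def by (simp add: algebra_simps)
    qed
    obtain m0 where m0pos: "0 < m0" and B0_low: "\<And>k v. \<epsilon> \<le> norm (grad (x k)) \<Longrightarrow> m0 * (norm v)^2 \<le> v \<bullet> B0 k v"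
    proof (cases "c0 = 0")
      case False
      hence c0p: "0 < c0" using params(2) by simp
      define m where "m = min (tau 0) (min c0 (c1 * \<epsilon> powr c2))"
      have mpos: "0 < m" unfolding m_def using tau0 c0p epos params by simp
      have tl: "m \<le> tau k" if "\<epsilon> \<le> norm (grad (x k))" for k
      proof (cases k)
        case 0 then show ?thesis unfolding m_def by simp
      next
        case (Suc j)
        have "min c0 (c1 * norm (grad (x (Suc j))) powr c2) \<le> tau (Suc j)" by (rule tau_lower[OF TO params(3)])
        moreover have "c1 * \<epsilon> powr c2 \<le> c1 * norm (grad (x (Suc j))) powr c2"
          using that Suc epos params by (intro mult_left_mono powr_mono2) auto
        ultimately show ?thesis unfolding m_def using Suc by (auto simp: min_def split: if_splits)
      qed
      show ?thesis
      proof (rule that[OF mpos])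
        fix k v assume ek: "\<epsilon> \<le> norm (grad (x k))"
        have "v \<bullet> B0 k v = tau k * (v \<bullet> v) + v \<bullet> blinfun_apply (S k) v" unfolding B0_apply by (simp add: inner_add_right)
        moreover have "m * (norm v)^2 \<le> tau k * (v \<bullet> v)" using tl[OF ek] by (simp add: power2_norm_eq_inner mult_right_mono)
        moreover have "0 \<le> v \<bullet> blinfun_apply (S k) v" using Sj(3) unfolding psdop_def by blast
        ultimately show "m * (norm v)^2 \<le> v \<bullet> B0 k v" by linarith
      qed
    next
      case True
      then obtain Mi where Mi: "\<And>k. bij (slbfgs_B0 tau S k) \<and> bounded_linear (inv (slbfgs_B0 tau S k))
                 \<and> onorm (inv (slbfgs_B0 tau S k)) \<le> Mi" using A5 act by blast
      define Mi' where "Mi' = max Mi 1"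
      have Mi'p: "0 < Mi'" unfolding Mi'_def by simp
      define m where "m = 1 / (Mi'^2 * M0)"
      have mpos: "0 < m" unfolding m_def using Mi'p M0pos by simp
      show ?thesis
      proof (rule that[OF mpos])
        fix k v assume ek: "\<epsilon> \<le> norm (grad (x k))"
        have bij: "bij (B0 k)" and blinv: "bounded_linear (inv (B0 k))" and on: "onorm (inv (B0 k)) \<le> Mi"
          using Mi[of k] unfolding B0_def by auto
        have "v = inv (B0 k) (B0 k v)" using bij by (simp add: bij_is_inj)
        hence "norm v \<le> onorm (inv (B0 k)) * norm (B0 k v)" using onorm[OF blinv, of "B0 k v"] by simp
        also have "\<dots> \<le> Mi' * norm (B0 k v)" using on unfolding Mi'_def by (intro mult_right_mono) auto
        finally have nv: "norm v \<le> Mi' * norm (B0 k v)" .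
        have "(norm v)^2 \<le> (Mi' * norm (B0 k v))^2" using nv by (simp add: power_mono)
        also have "\<dots> = Mi'^2 * (norm (B0 k v))^2" by (simp add: power_mult_distrib)
        also have "\<dots> \<le> Mi'^2 * (M0 * (v \<bullet> B0 k v))"
          using psd_norm_sq[OF B0_lin B0_sym B0_psd B0_up[OF ek]] by (simp add: mult_left_mono)
        finally have "(norm v)^2 \<le> (Mi'^2 * M0) * (v \<bullet> B0 k v)" by (simp add: algebra_simps)
        thus "m * (norm v)^2 \<le> v \<bullet> B0 k v" unfolding m_def using Mi'p M0pos
          by (simp add: field_simps)
      qed
    qed
    define m1 where "m1 = lb cs L m0 ell"
    define M1 where "M1 = ub cs L m0 M0 ell"
    have m1pos: "0 < m1" unfolding m1_def by (rule lb_pos[OF m0pos params(4)])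
    have M1pos: "0 < M1" unfolding M1_def using ub_mono[OF m0pos params(4), of 0 ell L M0] M0pos by simp
    have Bk_good: "goodop m1 M1 (Bk k)" if ek: "\<epsilon> \<le> norm (grad (x k))" for k
    proof -
      have g0: "goodop m0 M0 (B0 k)" unfolding goodop_def using B0_lin B0_sym B0_low[OF ek] B0_up[OF ek] by blast
      have G: "goodop (lb cs L m0 (length [k - ell..<k])) (ub cs L m0 M0 (length [k - ell..<k])) (Bk k)"
        unfolding Bk_fold using fold_good[OF g0 m0pos params(4) pair] by blast
      have Le: "length [k - ell..<k] \<le> ell" by (simp only: length_upt)
      show ?thesis unfolding m1_def M1_def
        by (rule goodop_weaken[OF G lb_anti[OF m0pos params(4) Le] ub_mono[OF m0pos params(4) Le]])
    qed
    have Lpos: "0 < L" using A2(1) .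
    define amin where "amin = (if armijo then min 1 (beta * ((1 - sgm) * m1 / L)) else (1 - eta) * m1 / L)"
    have amin_pos: "0 < amin"
      unfolding amin_def using ls_params m1pos Lpos by auto
    define \<delta> where "\<delta> = amin * sgm * m1 * (\<epsilon> / M1)^2"
    have \<delta>pos: "0 < \<delta>" unfolding \<delta>_def using amin_pos ls_params(1) m1pos epos M1pos by simp
    have per: "J (x (Suc k)) \<le> J (x k) - \<delta>" if ek: "\<epsilon> \<le> norm (grad (x k))" for k
    proof -
      have gk: "goodop m1 M1 (Bk k)" by (rule Bk_good[OF ek])
      have low: "m1 * (norm (d k))^2 \<le> d k \<bullet> Bk k (d k)" and up: "norm (Bk k (d k)) \<le> M1 * norm (d k)"
        using gk unfolding goodop_def by auto
      have dB: "m1 * (norm (d k))^2 \<le> - (grad (x k) \<bullet> d k)" using low gd[of k] by simp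
      have gn: "\<epsilon> \<le> M1 * norm (d k)" using ek up Bd[of k] by simp
      have dpos: "0 < norm (d k)" using gn epos M1pos by (smt (verit) mult_nonneg_nonpos norm_ge_zero)
      have d2pos: "0 < (norm (d k))^2" using dpos by simp
      have "\<epsilon> / M1 \<le> norm (d k)" using gn M1pos by (simp add: divide_le_eq mult.commute)
      hence dlow: "(\<epsilon> / M1)^2 \<le> (norm (d k))^2" using epos M1pos by (intro power_mono) auto
      have gdneg: "grad (x k) \<bullet> d k < 0" using dB m1pos d2pos by (smt (verit) mult_pos_pos)
      have xO: "J (x k) \<le> J (x 0)" using inO[of k] unfolding \<Omega>_def by simp
      have alow: "amin \<le> alpha k"
      proof (cases armijo)
        case True
        then obtain i where i: "alpha k = beta ^ i" "\<forall>j<i. \<not> armijo_ok J grad sgm (x k) (d k) (beta ^ j)"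
          using LS[of k] unfolding armijo_backtracking_def by auto
        have b: "0 < beta" "beta < 1" using True ls_params(3) by auto
        show ?thesis
        proof (cases i)
          case 0
          then show ?thesis using True i unfolding amin_def by simp
        next
          case (Suc i')
          have "\<not> armijo_ok J grad sgm (x k) (d k) (beta ^ i')" using i(2) Suc by simp
          hence fail: "J (x k) + beta ^ i' * sgm * (grad (x k) \<bullet> d k) < J (x k + beta ^ i' *\<^sub>R d k)"
            unfolding armijo_ok_def by simp
          have "(1 - sgm) * (- (grad (x k) \<bullet> d k)) \<le> L * beta ^ i' * (norm (d k))^2"
            by (rule armijo_fail_bound[OF A1(1) A2(2)[unfolded \<Omega>_def] xO gdneg _ ls_params(2) ls_params(1) fail])
               (use b in simp)
          moreover have "(1 - sgm) * (m1 * (norm (d k))^2) \<le> (1 - sgm) * (- (grad (x k) \<bullet> d k))"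
            using dB ls_params(2) by (intro mult_left_mono) auto
          ultimately have "((1 - sgm) * m1) * (norm (d k))^2 \<le> (L * beta ^ i') * (norm (d k))^2"
            by (simp add: algebra_simps)
          hence "(1 - sgm) * m1 \<le> L * beta ^ i'" using d2pos by (simp add: mult_le_cancel_right)
          hence "(1 - sgm) * m1 / L \<le> beta ^ i'" using Lpos by (simp add: divide_le_eq mult.commute)
          hence "beta * ((1 - sgm) * m1 / L) \<le> beta * beta ^ i'" using b by (intro mult_left_mono) auto
          hence "beta * ((1 - sgm) * m1 / L) \<le> alpha k" using i(1) Suc by simp
          thus ?thesis using True unfolding amin_def by simp
        qed
      next
        case False
        have wp: "eta * (grad (x k) \<bullet> d k) \<le> grad (x k + alpha k *\<^sub>R d k) \<bullet> d k"
          using LS[of k] False unfolding wolfe_powell_def by simp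
        have e: "eta < 1" using False ls_params(4) by simp
        have "(1 - eta) * (m1 * (norm (d k))^2) \<le> (1 - eta) * (- (grad (x k) \<bullet> d k))"
          using dB e by (intro mult_left_mono) auto
        also have "\<dots> \<le> (grad (x (Suc k)) - grad (x k)) \<bullet> d k"
          using wp xs[of k] by (simp add: inner_diff_left algebra_simps)
        also have "\<dots> \<le> norm (grad (x (Suc k)) - grad (x k)) * norm (d k)" by (rule norm_cauchy_schwarz)
        also have "\<dots> \<le> (L * norm (x (Suc k) - x k)) * norm (d k)"
          using lipschitz_onD[OF A2(2) inO[of "Suc k"] inO[of k]] by (simp add: dist_norm mult_right_mono)
        also have "\<dots> = (L * alpha k) * (norm (d k))^2"
          using xs[of k] alpha_pos[of k] by (simp add: power2_eq_square)
        finally have "((1 - eta) * m1) * (norm (d k))^2 \<le> (L * alpha k) * (norm (d k))^2" by (simp add: algebra_simps)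
        hence "(1 - eta) * m1 \<le> L * alpha k" using d2pos by (simp add: mult_le_cancel_right)
        hence "(1 - eta) * m1 / L \<le> alpha k" using Lpos by (simp add: divide_le_eq mult.commute)
        thus ?thesis using False unfolding amin_def by simp
      qed
      have "amin * sgm * (m1 * (\<epsilon> / M1)^2) \<le> alpha k * sgm * (- (grad (x k) \<bullet> d k))"
      proof (intro mult_mono)
        show "m1 * (\<epsilon> / M1)^2 \<le> - (grad (x k) \<bullet> d k)"
          using dB dlow m1pos by (smt (verit) mult_left_mono)
      qed (use alow ls_params(1) amin_pos gdneg m1pos in auto)
      hence "\<delta> \<le> - (alpha k * sgm * (grad (x k) \<bullet> d k))" unfolding \<delta>_def by (simp add: algebra_simps)
      thus ?thesis using armok[of k] by linarith
    qed
    show ?thesis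
      by (rule count_finite[of "\<lambda>k. J (x k)" _ \<delta> Jb]) (use Jdec per \<delta>pos Jb in auto)
  qed
  show ?thesis
  proof (intro conjI impI)
    assume e0: "eps = 0"
    show "(\<exists>k. grad (x (Suc k)) = 0) \<or>
            ((\<lambda>k. norm (grad (x k))) \<longlonglongrightarrow> 0 \<and>
             (\<forall>xb. (\<exists>r. strict_mono r \<and> (x \<circ> r) \<longlonglongrightarrow> xb) \<longrightarrow> grad xb = 0))"
    proof (cases "\<exists>k. grad (x (Suc k)) = 0")
      case True thus ?thesis by blast
    next
      case False
      hence allact: "\<forall>k. eps < norm (grad (x (Suc k)))" using e0 by simp
      have lim: "(\<lambda>k. norm (grad (x k))) \<longlonglongrightarrow> 0"
      proof (rule LIMSEQ_I)
        fix r :: real assume r: "0 < r"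
        have "finite {k. r \<le> norm (grad (x k))}" by (rule core[OF allact r])
        then obtain N where N: "{k. r \<le> norm (grad (x k))} \<subseteq> {..<N}" using finite_nat_bounded by blast
        have "\<forall>n\<ge>N. norm (norm (grad (x n)) - 0) < r"
        proof (intro allI impI)
          fix n assume "N \<le> n"
          hence "n \<notin> {k. r \<le> norm (grad (x k))}" using N by auto
          thus "norm (norm (grad (x n)) - 0) < r" by simp
        qed
        thus "\<exists>no. \<forall>n\<ge>no. norm (norm (grad (x n)) - 0) < r" by blast
      qed
      have clus: "\<forall>xb. (\<exists>r. strict_mono r \<and> (x \<circ> r) \<longlonglongrightarrow> xb) \<longrightarrow> grad xb = 0"
      proof (intro allI impI)
        fix xb assume "\<exists>r. strict_mono r \<and> (x \<circ> r) \<longlonglongrightarrow> xb"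
        then obtain r where r: "strict_mono r" "(x \<circ> r) \<longlonglongrightarrow> xb" by blast
        have "(\<lambda>n. grad ((x \<circ> r) n)) \<longlonglongrightarrow> grad xb"
          using continuous_on_tendsto_compose[OF A1(2) r(2)] by simp
        hence "(\<lambda>n. norm (grad ((x \<circ> r) n))) \<longlonglongrightarrow> norm (grad xb)" by (rule tendsto_norm)
        moreover have "(\<lambda>n. norm (grad ((x \<circ> r) n))) \<longlonglongrightarrow> 0"
          using LIMSEQ_subseq_LIMSEQ[OF lim r(1)] by (simp add: comp_def)
        ultimately have "norm (grad xb) = 0" using LIMSEQ_unique by blast
        thus "grad xb = 0" by simp
      qed
      show ?thesis using lim clus by blast
    qed
  next
    assume ep: "0 < eps"
    show "\<exists>k. norm (grad (x (Suc k))) \<le> eps"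
    proof (rule ccontr)
      assume "\<not> (\<exists>k. norm (grad (x (Suc k))) \<le> eps)"
      hence allact: "\<forall>k. eps < norm (grad (x (Suc k)))" by (simp add: not_le)
      have fin: "finite {k. eps \<le> norm (grad (x k))}" by (rule core[OF allact ep])
      moreover have "range Suc \<subseteq> {k. eps \<le> norm (grad (x k))}" using allact by (auto intro: less_imp_le)
      moreover have "infinite (range Suc)" by (simp add: finite_image_iff)
      ultimately show False using finite_subset by blast
    qed
  qed
qed


end
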